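(* Let $X_1,\dots,X_n$ be independent random variables with $X_i\sim\mathrm{Geo}(p_i)$, where $0<p_1\le p_2\le\dots\le p_n<1$, let $X=\sum_{i=1}^n X_i$ and $\mu=\mathbb{E}[X]=\sum_{i=1}^n 1/p_i$. Then for every $t\ge 0$, $$\Pr\big(X>3(\mu+t)\big)\le e^{-\frac{p_1}{2}\mu-p_1 t}.$$
   Context: $\mathrm{Geo}(p)$ denotes the geometric distribution on $\{1,2,\dots\}$ with $\Pr(X=k)=(1-p)^{k-1}p$. *)

theory Defs
  imports "HOL-Probability.Probability"
begin

text \<open>Geometric distribution on {1,2,...}: Pr(X=k) = (1-p)^(k-1) p,
  obtained by shifting the library's geometric_pmf (supported on {0,1,...}).\<close>
definition geo_pmf :: "real \<Rightarrow> nat pmf" where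
  "geo_pmf p = map_pmf Suc (geometric_pmf p)"

end

theory Submission
  imports Defs
begin

lemma one_minus_u: fixes u :: real assumes "0 \<le> u" "u \<le> 1/3" shows "exp (-(3/2*u)) \<le> 1 - u"
proof -
  have e: "1 + 3/2*u + (3/2*u)^2/2 \<le> exp (3/2*u)" by (rule exp_lower_Taylor_quadratic) (use assms in auto)
  have "1 \<le> (1-u) * (1 + 3/2*u + (3/2*u)^2/2)"
  proof -
    have "u*u \<le> u * (1/3)" using assms by (intro mult_left_mono) auto
    moreover have "u*u*u \<le> u*u*(1/3)" using assms by (intro mult_left_mono) auto
    moreover have "(1-u)*(1 + 3/2*u + (3/2*u)^2/2) = 1 + u/2 - 3/8*(u*u) - 9/8*(u*u*u)"
      by (simp add: power2_eq_square field_simps)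
    ultimately show ?thesis using assms by linarith
  qed
  also have "\<dots> \<le> (1-u) * exp (3/2*u)" using assms e by (intro mult_left_mono) auto
  finally have "1 \<le> (1-u) * exp (3/2*u)" .
  then show ?thesis by (simp add: exp_minus field_simps)
qed

lemma key:
  fixes q p :: real
  assumes "0 < q" "q \<le> p" "p < 1"
  shows "(1-p)*exp (q/3) < 1 \<and> p * exp (q/3) / (1 - (1-p)*exp (q/3)) \<le> exp (q / (2*p))"
proof -
  define \<theta> where "\<theta> = q/3"
  define u where "u = (1 - exp (-\<theta>))/p"
  have p0: "0 < p" using assms by auto
  have "1 - \<theta> \<le> exp (-\<theta>)" using exp_ge_add_one_self[of "-\<theta>"] by simp
  hence u1: "u \<le> \<theta>/p" unfolding u_def using p0 by (simp add: divide_right_mono)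
  have "\<theta>/p \<le> 1/3" unfolding \<theta>_def using assms by (simp add: field_simps)
  hence u13: "u \<le> 1/3" using u1 by linarith
  have u0: "0 \<le> u" unfolding u_def \<theta>_def using assms by simp
  have "exp (-(3/2*(\<theta>/p))) \<le> exp (-(3/2*u))" using u1 by simp
  also have "\<dots> \<le> 1 - u" by (rule one_minus_u[OF u0 u13])
  finally have A: "exp (-(3/2*(\<theta>/p))) \<le> 1 - u" .
  have B: "1 - (1-p)*exp \<theta> = p * exp \<theta> * (1 - u)"
    unfolding u_def using p0 by (simp add: field_simps exp_minus)
  have pos: "0 < 1 - u" using u13 by linarith
  have "1 - (1-p)*exp \<theta> > 0" unfolding B using p0 pos by simp
  moreover have "p * exp \<theta> / (1 - (1-p)*exp \<theta>) = 1 / (1-u)" unfolding B using p0 pos by simp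
  moreover have "1 / (1-u) \<le> exp (3/2*(\<theta>/p))"
    using A pos by (simp add: exp_minus field_simps)
  moreover have "3/2*(\<theta>/p) = q/(2*p)" unfolding \<theta>_def by simp
  ultimately show ?thesis unfolding \<theta>_def by simp
qed

lemma geo_mgf:
  fixes p \<theta> :: real
  assumes p: "0 < p" "p < 1" and r: "(1-p)*exp \<theta> < 1"
  shows "(\<integral>\<^sup>+k. ennreal (exp (\<theta> * real k)) \<partial>measure_pmf (geo_pmf p))
         = ennreal (p * exp \<theta> / (1 - (1-p)*exp \<theta>))"
proof -
  have "(\<integral>\<^sup>+k. ennreal (exp (\<theta> * real k)) \<partial>measure_pmf (geo_pmf p))
     = (\<integral>\<^sup>+k. ennreal (pmf (geometric_pmf p) k) * ennreal (exp (\<theta> * real (Suc k))) \<partial>count_space UNIV)"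
    unfolding geo_pmf_def nn_integral_map_pmf by (subst nn_integral_measure_pmf) simp
  also have "\<dots> = (\<Sum>k. ennreal (p * exp \<theta> * ((1-p)*exp \<theta>)^k))"
    unfolding nn_integral_count_space_nat
    apply (intro suminf_cong)
    using p by (simp add: ennreal_mult'[symmetric] exp_of_nat2_mult power_mult_distrib distrib_left exp_add mult_ac)
  also have "\<dots> = ennreal (p * exp \<theta> * (1 / (1 - (1-p)*exp \<theta>)))"
    apply (intro suminf_ennreal_eq sums_mult geometric_sums)
    using p r by auto
  finally show ?thesis by simp
qed
theorem lemma8:
  fixes M :: "'a measure" and X :: "nat \<Rightarrow> 'a \<Rightarrow> nat" and p :: "nat \<Rightarrow> real"
    and n :: nat and t :: real
  assumes "prob_space M"
    and "n \<ge> 1"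
    and "0 < p 1"
    and "\<And>i. 1 \<le> i \<Longrightarrow> i < n \<Longrightarrow> p i \<le> p (Suc i)"
    and "p n < 1"
    and "prob_space.indep_vars M (\<lambda>_. count_space UNIV) X {1..n}"
    and "\<And>i. i \<in> {1..n} \<Longrightarrow>
           distr M (count_space UNIV) (X i) = measure_pmf (geo_pmf (p i))"
    and "t \<ge> 0"
  shows "measure M {\<omega> \<in> space M.
            real (\<Sum>i=1..n. X i \<omega>) > 3 * ((\<Sum>i=1..n. 1 / p i) + t)}
         \<le> exp (- (p 1 / 2) * (\<Sum>i=1..n. 1 / p i) - p 1 * t)"
proof -
  interpret prob_space M by fact
  note indep = assms(6) and distrX = assms(7)
  define \<mu> where "\<mu> = (\<Sum>i=1..n. 1 / p i)"
  define a where "a = 3 * (\<mu> + t)"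
  define \<theta> where "\<theta> = p 1 / 3"
  define A where "A = {\<omega> \<in> space M. real (\<Sum>i=1..n. X i \<omega>) > a}"
  have lo: "p 1 \<le> p i" if "1 \<le> i" "i \<le> n" for i
    using that
  proof (induction i rule: dec_induct)
    case base then show ?case by simp
  next
    case (step k) then show ?case using assms(4)[of k] by simp
  qed
  have hi: "p i \<le> p n" if "1 \<le> i" "i \<le> n" for i
    using that(2,1)
  proof (induction i rule: inc_induct)
    case base then show ?case by simp
  next
    case (step k) then show ?case using assms(4)[of k] by simp
  qed
  have pi: "0 < p i" "p 1 \<le> p i" "p i < 1" if "i \<in> {1..n}" for i
    using lo[of i] hi[of i] that assms(3,5) by auto
  have measX[measurable]: "X i \<in> measurable M (count_space UNIV)" if "i \<in> {1..n}" for i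
    using indep that unfolding indep_vars_def by auto
  have Asets: "A \<in> sets M"
  proof -
    have m1: "(\<lambda>\<omega>. real (X i \<omega>)) \<in> borel_measurable M" if "i \<in> {1..n}" for i
      by (rule measurable_compose[OF measX[OF that]]) (simp add: measurable_count_space_eq1)
    have "(\<lambda>\<omega>. (\<Sum>i=1..n. real (X i \<omega>))) \<in> borel_measurable M"
      by (intro borel_measurable_sum m1)
    then have "(\<lambda>\<omega>. real (\<Sum>i=1..n. X i \<omega>)) \<in> borel_measurable M"
      by (simp add: of_nat_sum)
    then show ?thesis unfolding A_def by measurable
  qed
  define Y where "Y i \<omega> = ennreal (exp (\<theta> * real (X i \<omega>)))" for i \<omega>
  have indepY: "indep_vars (\<lambda>_. borel) Y {1..n}"
    unfolding Y_def by (rule indep_vars_compose2[OF indep, where Y="\<lambda>i k. ennreal (exp (\<theta> * real k))"]) auto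
  have intY: "(\<integral>\<^sup>+\<omega>. Y i \<omega> \<partial>M) \<le> ennreal (exp (p 1 / (2 * p i)))" if i: "i \<in> {1..n}" for i
  proof -
    have "(\<integral>\<^sup>+\<omega>. Y i \<omega> \<partial>M) = (\<integral>\<^sup>+k. ennreal (exp (\<theta> * real k)) \<partial>distr M (count_space UNIV) (X i))"
      unfolding Y_def by (subst nn_integral_distr) (use i in auto)
    also have "\<dots> = (\<integral>\<^sup>+k. ennreal (exp (\<theta> * real k)) \<partial>measure_pmf (geo_pmf (p i)))"
      using distrX[OF i] by simp
    also have "\<dots> = ennreal (p i * exp \<theta> / (1 - (1 - p i) * exp \<theta>))"
      using key[of "p 1" "p i"] pi[OF i] assms(3) unfolding \<theta>_def by (intro geo_mgf) auto
    also have "\<dots> \<le> ennreal (exp (p 1 / (2 * p i)))"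
      using key[of "p 1" "p i"] pi[OF i] assms(3) unfolding \<theta>_def by (intro ennreal_leI) auto
    finally show ?thesis .
  qed
  have "emeasure M A = (\<integral>\<^sup>+\<omega>. indicator A \<omega> \<partial>M)"
    using Asets by simp
  also have "\<dots> \<le> (\<integral>\<^sup>+\<omega>. ennreal (exp (- \<theta> * a)) * (\<Prod>i\<in>{1..n}. Y i \<omega>) \<partial>M)"
  proof (intro nn_integral_mono)
    fix \<omega> assume "\<omega> \<in> space M"
    have eq: "ennreal (exp (- \<theta> * a)) * (\<Prod>i\<in>{1..n}. Y i \<omega>) = ennreal (exp (\<theta> * (real (\<Sum>i=1..n. X i \<omega>) - a)))"
      unfolding Y_def
      by (simp add: prod_ennreal ennreal_mult'[symmetric] exp_sum[symmetric] sum_distrib_left exp_add[symmetric] algebra_simps)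
    show "indicator A \<omega> \<le> ennreal (exp (- \<theta> * a)) * (\<Prod>i\<in>{1..n}. Y i \<omega>)"
      unfolding eq
    proof (cases "\<omega> \<in> A")
      case True
      then have "0 \<le> \<theta> * (real (\<Sum>i=1..n. X i \<omega>) - a)"
        unfolding A_def \<theta>_def using assms(3) by simp
      then show "indicator A \<omega> \<le> ennreal (exp (\<theta> * (real (\<Sum>i=1..n. X i \<omega>) - a)))"
        using True by (simp add: indicator_def)
    qed (simp add: indicator_def)
  qed
  also have "\<dots> = ennreal (exp (- \<theta> * a)) * (\<integral>\<^sup>+\<omega>. (\<Prod>i\<in>{1..n}. Y i \<omega>) \<partial>M)"
  proof (rule nn_integral_cmult)
    have "\<forall>i\<in>{1..n}. Y i \<in> borel_measurable M" using indepY unfolding indep_vars_def by auto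
    then show "(\<lambda>\<omega>. \<Prod>i\<in>{1..n}. Y i \<omega>) \<in> borel_measurable M"
      by (intro borel_measurable_prod_ennreal) auto
  qed
  also have "\<dots> = ennreal (exp (- \<theta> * a)) * (\<Prod>i\<in>{1..n}. \<integral>\<^sup>+\<omega>. Y i \<omega> \<partial>M)"
    using indepY by (subst indep_vars_nn_integral) auto
  also have "\<dots> \<le> ennreal (exp (- \<theta> * a)) * (\<Prod>i\<in>{1..n}. ennreal (exp (p 1 / (2 * p i))))"
    by (intro mult_left_mono prod_mono_ennreal intY) auto
  also have "\<dots> = ennreal (exp (- \<theta> * a + (\<Sum>i=1..n. p 1 / (2 * p i))))"
    by (simp add: prod_ennreal ennreal_mult'[symmetric] exp_sum[symmetric] exp_add[symmetric] exp_diff)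
  also have "- \<theta> * a + (\<Sum>i=1..n. p 1 / (2 * p i)) = - (p 1 / 2) * \<mu> - p 1 * t"
  proof -
    have "(\<Sum>i=1..n. p 1 / (2 * p i)) = p 1 / 2 * \<mu>"
      unfolding \<mu>_def sum_distrib_left by (intro sum.cong) auto
    then show ?thesis unfolding a_def \<theta>_def by (simp add: algebra_simps)
  qed
  finally have "emeasure M A \<le> ennreal (exp (- (p 1 / 2) * \<mu> - p 1 * t))" .
  then have "measure M A \<le> exp (- (p 1 / 2) * \<mu> - p 1 * t)"
    unfolding measure_def by (intro enn2real_leI) auto
  then show ?thesis unfolding A_def a_def \<mu>_def .
qed
end
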